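(* Let $X$ be a nonnegative absolutely continuous random variable whose pdf $f$ is log-concave on $(0,\infty)$, and let $\overline F(t)=\mathbb P(X>t)$, $D=\{t\ge0:\overline F(t)>0\}$. For $t\in D$ let $X_t=[X-t\mid X>t]$ be the residual lifetime, with pdf $f_t(x)=f(x+t)/\overline F(t)$, $x>0$, and let $V(X_t)=\mathrm{Var}[\log f_t(X_t)]$ be its residual varentropy. Then $V(X_t)\le 1$ for all $t\in D$.
   Context: $[X\mid B]$ denotes a random variable distributed as $X$ conditional on the event $B$. A pdf $f$ is log-concave on $(0,\infty)$ if $\log f$ is concave there. *)

theory Defs
  imports "HOL-Probability.Probability"
begin

text \<open>Log-concavity of a nonnegative function on a set S, allowing zeros
  (i.e. concavity of the extended-real valued log f, with log 0 = -infinity).\<close>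
definition log_concave_on :: "real set \<Rightarrow> (real \<Rightarrow> real) \<Rightarrow> bool" where
  "log_concave_on S f \<longleftrightarrow> (\<forall>x\<in>S. 0 \<le> f x) \<and>
     (\<forall>x\<in>S. \<forall>y\<in>S. \<forall>u\<in>{0<..<1::real}.
        f x powr (1 - u) * f y powr u \<le> f ((1 - u) * x + u * y))"

definition surv :: "'a measure \<Rightarrow> ('a \<Rightarrow> real) \<Rightarrow> real \<Rightarrow> real" where
  "surv M X t = measure M {\<omega> \<in> space M. t < X \<omega>}"

definition surv_support :: "'a measure \<Rightarrow> ('a \<Rightarrow> real) \<Rightarrow> real set" where
  "surv_support M X = {t. 0 \<le> t \<and> surv M X t > 0}"

definition residual_pdf :: "'a measure \<Rightarrow> ('a \<Rightarrow> real) \<Rightarrow> (real \<Rightarrow> real) \<Rightarrow> real \<Rightarrow> real \<Rightarrow> real" where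
  "residual_pdf M X f t x = f (x + t) / surv M X t"

text \<open>Residual lifetime X_t = [X - t | X > t]: the random variable X - t on the
  probability space M conditioned on the event {X > t}.\<close>
definition cond_space :: "'a measure \<Rightarrow> ('a \<Rightarrow> real) \<Rightarrow> real \<Rightarrow> 'a measure" where
  "cond_space M X t = uniform_measure M {\<omega> \<in> space M. t < X \<omega>}"

definition residual_lifetime :: "('a \<Rightarrow> real) \<Rightarrow> real \<Rightarrow> 'a \<Rightarrow> real" where
  "residual_lifetime X t = (\<lambda>\<omega>. X \<omega> - t)"

definition residual_info :: "'a measure \<Rightarrow> ('a \<Rightarrow> real) \<Rightarrow> (real \<Rightarrow> real) \<Rightarrow> real \<Rightarrow> 'a \<Rightarrow> real" where
  "residual_info M X f t = (\<lambda>\<omega>. ln (residual_pdf M X f t (residual_lifetime X t \<omega>)))"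

definition residual_varentropy :: "'a measure \<Rightarrow> ('a \<Rightarrow> real) \<Rightarrow> (real \<Rightarrow> real) \<Rightarrow> real \<Rightarrow> real" where
  "residual_varentropy M X f t =
     prob_space.variance (cond_space M X t) (residual_info M X f t)"

end

theory Submission
  imports Defs "HOL-Real_Asymp.Real_Asymp"
begin


lemma mom_nn: "(\<integral>\<^sup>+u. ennreal (indicator {0..} (u::real) * (u^k * exp(-u))) \<partial>lborel) = ennreal (fact k)"
proof -
  have "(\<integral>\<^sup>+u. ennreal (indicator {0..} (u::real) * (u^k * exp(-u))) \<partial>lborel)
      = (\<integral>\<^sup>+x. ennreal (x^k * exp (-x)) * indicator {0 ..} x \<partial>lborel)"
    by (intro nn_integral_cong) (auto split: split_indicator)
  also have "\<dots> = real_of_nat (fact k)" by (rule nn_intergal_power_times_exp_Ici)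
  finally show ?thesis by simp
qed

lemma mom_int: "integrable lborel (\<lambda>u::real. indicator {0..} u * (u^k * exp(-u)))"
  by (rule integrableI_nn_integral_finite[where x="fact k"]) (auto simp: mom_nn split: split_indicator)

lemma mom_val: "integral\<^sup>L lborel (\<lambda>u::real. indicator {0..} u * (u^k * exp(-u))) = fact k"
  by (subst integral_eq_nn_integral) (auto simp: mom_nn split: split_indicator)

lemma H1_nn:
  "(\<integral>\<^sup>+u. ennreal (indicator {w..} (u::real) * ((u^2+2)*exp(-u))) \<partial>lborel) = ennreal ((w^2+2*w+4)*exp(-w))"
proof -
  have "(\<integral>\<^sup>+u. ennreal (indicator {w..} (u::real) * ((u^2+2)*exp(-u))) \<partial>lborel)
     = (\<integral>\<^sup>+u. ennreal ((u^2+2)*exp(-u)) * indicator {w..} u \<partial>lborel)"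
    by (intro nn_integral_cong) (auto split: split_indicator)
  also have "\<dots> = 0 - (-((w^2+2*w+4)*exp(-w)))"
  proof (rule nn_integral_FTC_atLeast)
    show "(\<lambda>u::real. (u^2+2)*exp(-u)) \<in> borel_measurable borel" by measurable
    show "DERIV (\<lambda>u::real. -((u^2+2*u+4)*exp(-u))) x :> (x^2+2)*exp(-x)" for x
      by (auto intro!: derivative_eq_intros simp: algebra_simps power2_eq_square)
    show "0 \<le> (x^2+2)*exp(-x)" for x::real by (auto intro: add_nonneg_pos)
    show "((\<lambda>u::real. -((u^2+2*u+4)*exp(-u))) \<longlongrightarrow> 0) at_top" by real_asymp
  qed
  finally show ?thesis by simp
qed

lemma H2_nn: assumes "0 \<le> w"
  shows "(\<integral>\<^sup>+u. ennreal (indicator {w..} (u::real) * (4*u*exp(-u))) \<partial>lborel) = ennreal (4*(w+1)*exp(-w))"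
proof -
  have "(\<integral>\<^sup>+u. ennreal (indicator {w..} (u::real) * (4*u*exp(-u))) \<partial>lborel)
     = (\<integral>\<^sup>+u. ennreal (4*u*exp(-u)) * indicator {w..} u \<partial>lborel)"
    by (intro nn_integral_cong) (auto split: split_indicator)
  also have "\<dots> = 0 - (-(4*(w+1)*exp(-w)))"
  proof (rule nn_integral_FTC_atLeast)
    show "(\<lambda>u::real. 4*u*exp(-u)) \<in> borel_measurable borel" by measurable
    show "DERIV (\<lambda>u::real. -(4*(u+1)*exp(-u))) x :> 4*x*exp(-x)" for x
      by (auto intro!: derivative_eq_intros simp: algebra_simps)
    show "0 \<le> 4*x*exp(-x)" if "w \<le> x" for x using that assms by auto
    show "((\<lambda>u::real. -(4*(u+1)*exp(-u))) \<longlongrightarrow> 0) at_top" by real_asymp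
  qed
  finally show ?thesis by simp
qed

lemma nn_to_int:
  fixes g :: "'a \<Rightarrow> real"
  assumes "g \<in> borel_measurable M" "\<And>x. 0 \<le> g x" "(\<integral>\<^sup>+x. ennreal (g x) \<partial>M) = ennreal r" "0 \<le> r"
  shows "integrable M g" "integral\<^sup>L M g = r"
proof -
  show i: "integrable M g" by (rule integrableI_nn_integral_finite[OF assms(1) _ assms(3)]) (use assms in auto)
  show "integral\<^sup>L M g = r" using assms by (subst integral_eq_nn_integral) auto
qed

definition "mm j u = indicator {0..} u * (u ^ j * exp (- u))" for u :: real

lemma mm_int[intro]: "integrable lborel (mm j)"
  unfolding mm_def by (rule mom_int)

lemma mm_val: "integral\<^sup>L lborel (mm j) = fact j"
  unfolding mm_def by (rule mom_val)

lemma mm_meas[measurable]: "mm j \<in> borel_measurable borel"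
  unfolding mm_def by measurable


context
  fixes f :: "real \<Rightarrow> real" and t S :: real
  assumes f_nn: "\<And>x. 0 \<le> f x" and f_meas[measurable]: "f \<in> borel_measurable borel"
    and lc: "log_concave_on {0<..} f" and t0: "0 \<le> t"
    and fint: "(\<integral>\<^sup>+x. ennreal (f x) * indicator {t<..} x \<partial>lborel) = ennreal S" and S0: "0 < S"
begin

lemma lc_lower:
  assumes x: "t < x" and y: "t < y" and l: "0 \<le> l" "l \<le> 1" and a: "0 < a" "a \<le> f x"
    and b: "0 < b" "b \<le> f y"
  shows "a powr (1 - l) * b powr l \<le> f ((1 - l) * x + l * y)"
proof (cases "l = 0 \<or> l = 1")
  case True
  then show ?thesis using a b by auto
next
  case False
  with l have l': "l \<in> {0<..<1}" by auto
  have "a powr (1 - l) * b powr l \<le> f x powr (1 - l) * f y powr l"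
    using a b l by (intro mult_mono powr_mono2) auto
  also have "\<dots> \<le> f ((1 - l) * x + l * y)"
    using lc x y t0 l' unfolding log_concave_on_def by auto
  finally show ?thesis .
qed

lemma seg:
  assumes "t < a" "a \<le> b" "0 \<le> m" "\<And>z. a \<le> z \<Longrightarrow> z \<le> b \<Longrightarrow> m \<le> f z"
  shows "m * (b - a) \<le> S"
proof -
  have "ennreal (m * (b - a)) = (\<integral>\<^sup>+x. ennreal m * indicator {a..b} x \<partial>lborel)"
    using assms by (simp add: nn_integral_cmult_indicator ennreal_mult)
  also have "\<dots> \<le> (\<integral>\<^sup>+x. ennreal (f x) * indicator {t<..} x \<partial>lborel)"
    using assms by (intro nn_integral_mono) (auto split: split_indicator intro: ennreal_leI)
  finally show ?thesis using fint S0 by simp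
qed

lemma two_points: "\<exists>x1 x2. t < x1 \<and> x1 < x2 \<and> 0 < f x1 \<and> 0 < f x2"
proof (rule ccontr)
  assume H: "\<not> ?thesis"
  have "AE x in lborel. ennreal (f x) * indicator {t<..} x = 0"
  proof (cases "\<exists>a. t < a \<and> 0 < f a")
    case False
    then show ?thesis using f_nn by (intro AE_I2) (auto split: split_indicator simp: less_le)
  next
    case True
    then obtain a where a: "t < a" "0 < f a" by auto
    show ?thesis
      using AE_lborel_singleton[of a]
    proof eventually_elim
      case (elim x)
      have "\<not> (t < x \<and> 0 < f x)"
      proof
        assume "t < x \<and> 0 < f x"
        then show False using H a elim by (cases "x < a") (auto simp: neq_iff)
      qed
      then show ?case using f_nn[of x] by (auto split: split_indicator simp: less_le)
    qed
  qed
  then have "(\<integral>\<^sup>+x. ennreal (f x) * indicator {t<..} x \<partial>lborel) = 0"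
    by (simp add: nn_integral_0_iff_AE)
  then show False using fint S0 by simp
qed

lemma sqrt_le_powr:
  assumes "0 < a" "a \<le> b" "1/2 \<le> l" "l \<le> 1"
  shows "sqrt (a * b) \<le> a powr (1 - l) * b powr l"
proof -
  have ab: "0 < a * b" using assms by simp
  have "sqrt (a * b) = exp ((ln a + ln b) / 2)"
    using assms ab by (simp add: powr_half_sqrt[symmetric] powr_def ln_mult)
  moreover have "a powr (1 - l) * b powr l = exp ((1 - l) * ln a + l * ln b)"
    using assms by (simp add: powr_def exp_add)
  moreover have "(ln a + ln b) / 2 \<le> (1 - l) * ln a + l * ln b"
  proof -
    have "0 \<le> (l - 1/2) * (ln b - ln a)" using assms by (intro mult_nonneg_nonneg) auto
    moreover have "(l - 1/2) * (ln b - ln a) = ((1 - l) * ln a + l * ln b) - (ln a + ln b)/2"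
      by (simp add: field_simps)
    ultimately show ?thesis by linarith
  qed
  ultimately show ?thesis by simp
qed

lemma half_bound:
  assumes p: "t < p" and q: "t < q" and a: "0 < a" "a \<le> b" "a \<le> f p" "b \<le> f q"
  shows "sqrt (a * b) * (\<bar>q - p\<bar> / 2) \<le> S"
proof (cases "p \<le> q")
  case True
  have "sqrt (a * b) * (q - (p + q) / 2) \<le> S"
  proof (rule seg)
    show "t < (p + q) / 2" using p q by simp
    show "(p + q) / 2 \<le> q" using True by simp
    show "0 \<le> sqrt (a * b)" using a by simp
    fix z assume z: "(p + q) / 2 \<le> z" "z \<le> q"
    show "sqrt (a * b) \<le> f z"
    proof (cases "p = q")
      case True
      then have "z = q" using z by simp
      have "sqrt (a * b) \<le> sqrt (b * b)" using a by (intro real_sqrt_le_mono mult_right_mono) auto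
      also have "\<dots> = b" using a by simp
      finally show ?thesis using a \<open>z = q\<close> by simp
    next
      case False
      define l where "l = (z - p) / (q - p)"
      have qp: "0 < q - p" using False \<open>p \<le> q\<close> by simp
      have l1: "1/2 \<le> l" using z qp by (simp add: l_def field_simps)
      have l2: "l \<le> 1" using z qp by (simp add: l_def field_simps)
      have e: "l * (q - p) = z - p" using qp by (simp add: l_def)
      have "(1 - l) * p + l * q = p + l * (q - p)" by (simp add: algebra_simps)
      then have zl: "z = (1 - l) * p + l * q" using e by simp
      have "sqrt (a * b) \<le> a powr (1 - l) * b powr l" by (rule sqrt_le_powr) (use a l1 l2 in auto)
      also have "\<dots> \<le> f z" unfolding zl by (rule lc_lower) (use p q a l1 l2 in auto)
      finally show ?thesis .
    qed
  qed
  then show ?thesis using True by (simp add: field_simps)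
next
  case False
  have "sqrt (a * b) * ((p + q) / 2 - q) \<le> S"
  proof (rule seg)
    show "t < q" using q by simp
    show "q \<le> (p + q) / 2" using False by simp
    show "0 \<le> sqrt (a * b)" using a by simp
    fix z assume z: "q \<le> z" "z \<le> (p + q) / 2"
    define l where "l = (p - z) / (p - q)"
    have qp: "0 < p - q" using False by simp
    have l1: "1/2 \<le> l" using z qp by (simp add: l_def field_simps)
    have l2: "l \<le> 1" using z qp by (simp add: l_def field_simps)
    have e: "l * (p - q) = p - z" using qp by (simp add: l_def)
    have "(1 - l) * p + l * q = p - l * (p - q)" by (simp add: algebra_simps)
    then have zl: "z = (1 - l) * p + l * q" using e by simp
    have "sqrt (a * b) \<le> a powr (1 - l) * b powr l" by (rule sqrt_le_powr) (use a l1 l2 in auto)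
    also have "\<dots> \<le> f z" unfolding zl by (rule lc_lower) (use p q a l1 l2 in auto)
    finally show "sqrt (a * b) \<le> f z" .
  qed
  then show ?thesis using False by (simp add: field_simps)
qed

lemma f_bounded: "\<exists>B. \<forall>y. t < y \<longrightarrow> f y \<le> B"
proof -
  obtain x1 x2 where x: "t < x1" "x1 < x2" "0 < f x1" "0 < f x2" using two_points by blast
  define c where "c = min (f x1) (f x2)"
  define d where "d = x2 - x1"
  have c0: "0 < c" and d0: "0 < d" using x by (auto simp: c_def d_def)
  have "f y \<le> max c (16 * S^2 / (d^2 * c))" if y: "t < y" for y
  proof (cases "f y \<le> c")
    case True then show ?thesis by simp
  next
    case False
    have "d / 2 \<le> \<bar>y - x1\<bar> \<or> d / 2 \<le> \<bar>y - x2\<bar>" using d_def by linarith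
    then obtain x where xx: "x = x1 \<or> x = x2" "d / 2 \<le> \<bar>y - x\<bar>" by blast
    have xt: "t < x" and cx: "c \<le> f x" using xx x by (auto simp: c_def)
    have "sqrt (c * f y) * (\<bar>y - x\<bar> / 2) \<le> S"
      by (rule half_bound) (use xt y c0 False cx in auto)
    moreover have "sqrt (c * f y) * (d / 4) \<le> sqrt (c * f y) * (\<bar>y - x\<bar> / 2)"
      using xx c0 f_nn[of y] by (intro mult_left_mono) auto
    ultimately have h: "sqrt (c * f y) * d \<le> 4 * S" by (simp add: algebra_simps)
    have "(sqrt (c * f y) * d)^2 \<le> (4 * S)^2"
      using h d0 c0 f_nn[of y] by (intro power_mono) auto
    then have "c * f y * d^2 \<le> 16 * S^2"
      using c0 f_nn[of y] by (simp add: power_mult_distrib)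
    then have "f y \<le> 16 * S^2 / (d^2 * c)"
      using c0 d0 by (simp add: field_simps)
    then show ?thesis by simp
  qed
  then show ?thesis by blast
qed

definition "K = Sup (f ` {t<..})"

lemma K_props: "\<And>y. t < y \<Longrightarrow> f y \<le> K" "0 < K" "\<And>v. v < K \<Longrightarrow> \<exists>y. t < y \<and> v < f y"
proof -
  obtain B where B: "\<forall>y. t < y \<longrightarrow> f y \<le> B" using f_bounded by blast
  have bdd: "bdd_above (f ` {t<..})" using B by (auto intro!: bdd_aboveI)
  have ne: "f ` {t<..} \<noteq> {}" by auto
  show le: "f y \<le> K" if "t < y" for y using that bdd unfolding K_def by (intro cSup_upper) auto
  obtain x1 x2 where x: "t < x1" "x1 < x2" "0 < f x1" "0 < f x2" using two_points by blast
  show "0 < K" using le[of x1] x by simp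
  show "\<exists>y. t < y \<and> v < f y" if "v < K" for v
    using less_cSupD[OF ne, of v] that unfolding K_def by auto
qed

definition "A u = {x. t < x \<and> K * exp (- u) \<le> f x}"

lemma A_sets[measurable]: "A u \<in> sets lborel"
  unfolding A_def by measurable

lemma A_sets2[measurable]: "A u \<in> sets borel"
  unfolding A_def by measurable

lemma A_mono: "u \<le> v \<Longrightarrow> A u \<subseteq> A v"
  using K_props(2) unfolding A_def by (auto elim!: order_trans[rotated])

lemma A_conv:
  assumes x: "x \<in> A s" and y: "y \<in> A r" and l: "0 \<le> l" "l \<le> 1"
  shows "(1 - l) * x + l * y \<in> A ((1 - l) * s + l * r)"
proof -
  have K0: "0 < K" by (rule K_props)
  have xt: "t < x" and yt: "t < y" using x y by (auto simp: A_def)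
  have "(K * exp (- s)) powr (1 - l) * (K * exp (- r)) powr l \<le> f ((1 - l) * x + l * y)"
    by (rule lc_lower) (use x y l K0 in \<open>auto simp: A_def\<close>)
  moreover have "(K * exp (- s)) powr (1 - l) * (K * exp (- r)) powr l = K * exp (- ((1 - l) * s + l * r))"
  proof -
    have "(K * exp (- s)) powr (1 - l) * (K * exp (- r)) powr l
        = exp ((1 - l) * (ln K - s) + l * (ln K - r))"
      using K0 by (simp add: powr_def ln_mult exp_add)
    also have "\<dots> = exp (ln K) * exp (- ((1 - l) * s + l * r))"
      by (simp add: exp_add[symmetric] algebra_simps)
    also have "\<dots> = K * exp (- ((1 - l) * s + l * r))" using K0 by simp
    finally show ?thesis .
  qed
  moreover have "t < (1 - l) * x + l * y"
  proof -
    have "(1 - l) * t \<le> (1 - l) * x" "l * t \<le> l * y" using xt yt l by (auto intro: mult_left_mono)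
    moreover have "(1 - l) * t < (1 - l) * x \<or> l * t < l * y" using xt yt l
      by (cases "l = 1") auto
    ultimately have "(1 - l) * t + l * t < (1 - l) * x + l * y" by linarith
    then show ?thesis by (simp add: algebra_simps)
  qed
  ultimately show ?thesis unfolding A_def by auto
qed

lemma A_interval:
  assumes "x \<in> A u" "y \<in> A u" "x \<le> z" "z \<le> y"
  shows "z \<in> A u"
proof (cases "x = y")
  case True then show ?thesis using assms by simp
next
  case False
  define l where "l = (z - x) / (y - x)"
  have yx: "0 < y - x" using False assms by simp
  have l: "0 \<le> l" "l \<le> 1" using assms yx by (auto simp: l_def field_simps)
  have e: "l * (y - x) = z - x" using yx by (simp add: l_def)
  have "(1 - l) * x + l * y = x + l * (y - x)" by (simp add: algebra_simps)
  then have zl: "z = (1 - l) * x + l * y" using e by simp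
  have "(1 - l) * u + l * u = u" by (simp add: algebra_simps)
  then show ?thesis using A_conv[OF assms(1,2) l] zl by simp
qed

lemma A_width:
  assumes x: "x \<in> A u" and y: "y \<in> A u" and xy: "x \<le> y"
  shows "K * exp (- u) * (y - x) \<le> S"
proof (rule seg)
  show "t < x" using x by (simp add: A_def)
  show "x \<le> y" by fact
  show "0 \<le> K * exp (- u)" using K_props(2) by simp
  fix z assume "x \<le> z" "z \<le> y"
  then have "z \<in> A u" using A_interval[OF x y] by simp
  then show "K * exp (- u) \<le> f z" by (simp add: A_def)
qed

lemma A_fin_aux: "ennreal (K * exp (- u)) * emeasure lborel (A u) \<le> ennreal S"
proof -
  have "ennreal (K * exp (- u)) * emeasure lborel (A u) = (\<integral>\<^sup>+x. ennreal (K * exp (- u)) * indicator (A u) x \<partial>lborel)"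
    using A_sets by (simp add: nn_integral_cmult_indicator)
  also have "\<dots> \<le> (\<integral>\<^sup>+x. ennreal (f x) * indicator {t<..} x \<partial>lborel)"
    by (intro nn_integral_mono) (auto simp: A_def split: split_indicator intro: ennreal_leI)
  finally show ?thesis using fint by simp
qed

lemma A_fin: "emeasure lborel (A u) < \<infinity>"
proof (rule ccontr)
  assume "\<not> ?thesis"
  then have "emeasure lborel (A u) = \<infinity>" by (simp add: less_top[symmetric])
  moreover have "0 < K * exp (- u)" using K_props(2) by simp
  ultimately show False using A_fin_aux[of u] K_props(2) by (simp add: ennreal_mult_top top_unique)
qed

definition "L u = measure lborel (A u)"

lemma L_emeasure: "emeasure lborel (A u) = ennreal (L u)"
  using A_fin[of u] unfolding L_def by (simp add: emeasure_eq_ennreal_measure less_top)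

lemma L_nn: "0 \<le> L u" unfolding L_def by simp

lemma L_bound: "K * exp (- u) * L u \<le> S"
  using A_fin_aux[of u] K_props(2) S0 unfolding L_emeasure
  by (simp add: ennreal_mult[symmetric] L_nn)

lemma L_mono: "u \<le> v \<Longrightarrow> L u \<le> L v"
  unfolding L_def using A_mono[of u v] A_fin[of v]
  by (intro measure_mono_fmeasurable) (auto simp: fmeasurable_def)

lemma L_mono': "mono L" using L_mono by (auto simp: mono_def)

lemma L_meas[measurable]: "L \<in> borel_measurable borel"
  by (rule borel_measurable_mono[OF L_mono'])

lemma A_ne: "0 < u \<Longrightarrow> A u \<noteq> {}"
proof -
  assume u: "0 < u"
  have "K * exp (- u) < K" using K_props(2) u by simp
  then obtain y where "t < y" "K * exp (- u) < f y" using K_props(3) by blast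
  then show ?thesis by (auto simp: A_def)
qed

lemma A_bdd_below: "bdd_below (A u)"
  by (rule bdd_belowI[of _ t]) (auto simp: A_def)

lemma A_bdd_above: "bdd_above (A u)"
proof (cases "A u = {}")
  case True then show ?thesis by simp
next
  case False
  then obtain x0 where x0: "x0 \<in> A u" by auto
  have c: "0 < K * exp (- u)" using K_props(2) by simp
  show ?thesis
  proof (rule bdd_aboveI[of _ "x0 + S / (K * exp (- u))"])
    fix y assume y: "y \<in> A u"
    show "y \<le> x0 + S / (K * exp (- u))"
    proof (cases "x0 \<le> y")
      case True
      have "K * exp (- u) * (y - x0) \<le> S" by (rule A_width[OF x0 y True])
      then have "y - x0 \<le> S / (K * exp (- u))" using c by (simp add: le_divide_eq mult.commute)
      then show ?thesis by linarith
    next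
      case False
      have "0 \<le> S / (K * exp (- u))" using c S0 by simp
      then show ?thesis using False by linarith
    qed
  qed
qed

definition "alpha u = Inf (A u)"
definition "beta u = Sup (A u)"

lemma L_eq: assumes u: "0 < u" shows "L u = beta u - alpha u"
proof -
  have ne: "A u \<noteq> {}" using A_ne u by simp
  have ab: "alpha u \<le> beta u"
  proof -
    obtain x where "x \<in> A u" using ne by auto
    then show ?thesis unfolding alpha_def beta_def
      using cInf_lower[OF _ A_bdd_below] cSup_upper[OF _ A_bdd_above] by force
  qed
  have sub1: "{alpha u <..< beta u} \<subseteq> A u"
  proof
    fix z assume z: "z \<in> {alpha u <..< beta u}"
    obtain x where x: "x \<in> A u" "x < z" using cInf_lessD[OF ne, of z] z unfolding alpha_def by auto
    obtain y where y: "y \<in> A u" "z < y" using less_cSupD[OF ne, of z] z unfolding beta_def by auto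
    show "z \<in> A u" by (rule A_interval[OF x(1) y(1)]) (use x y in auto)
  qed
  have sub2: "A u \<subseteq> {alpha u .. beta u}"
    unfolding alpha_def beta_def using cInf_lower[OF _ A_bdd_below] cSup_upper[OF _ A_bdd_above] by auto
  have "measure lborel {alpha u <..< beta u} \<le> measure lborel (A u)"
    using sub1 A_fin[of u] by (intro measure_mono_fmeasurable) (auto simp: fmeasurable_def)
  moreover have "measure lborel {alpha u <..< beta u} = beta u - alpha u"
    using ab by (simp add: measure_def)
  moreover have "measure lborel (A u) \<le> measure lborel {alpha u .. beta u}"
    using sub2 ab by (intro measure_mono_fmeasurable) (auto simp: fmeasurable_def)
  moreover have "measure lborel {alpha u .. beta u} = beta u - alpha u"
    using ab by simp
  ultimately show ?thesis unfolding L_def by linarith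
qed

lemma beta_concave:
  assumes s: "0 < s" and r: "0 < r" and l: "0 \<le> l" "l \<le> 1"
  shows "(1 - l) * beta s + l * beta r \<le> beta ((1 - l) * s + l * r)"
proof (rule ccontr)
  assume "\<not> ?thesis"
  then have d: "0 < (1 - l) * beta s + l * beta r - beta ((1 - l) * s + l * r)" (is "0 < ?d") by simp
  obtain x where x: "x \<in> A s" "beta s - ?d < x"
    using less_cSupD[OF A_ne[OF s], of "beta s - ?d"] d unfolding beta_def by auto
  obtain y where y: "y \<in> A r" "beta r - ?d < y"
    using less_cSupD[OF A_ne[OF r], of "beta r - ?d"] d unfolding beta_def by auto
  have "(1 - l) * x + l * y \<in> A ((1 - l) * s + l * r)" by (rule A_conv[OF x(1) y(1) l])
  then have le: "(1 - l) * x + l * y \<le> beta ((1 - l) * s + l * r)"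
    unfolding beta_def by (intro cSup_upper A_bdd_above)
  have "(1 - l) * (beta s - ?d) \<le> (1 - l) * x" using x l by (intro mult_left_mono) auto
  moreover have "l * (beta r - ?d) \<le> l * y" using y l by (intro mult_left_mono) auto
  moreover have "(1 - l) * (beta s - ?d) < (1 - l) * x \<or> l * (beta r - ?d) < l * y"
    using x y l by (cases "l = 1") auto
  ultimately have "(1 - l) * (beta s - ?d) + l * (beta r - ?d) < (1 - l) * x + l * y" by linarith
  moreover have "(1 - l) * (beta s - ?d) + l * (beta r - ?d) = beta ((1 - l) * s + l * r)"
    by (simp add: algebra_simps)
  ultimately show False using le by linarith
qed

lemma alpha_convex:
  assumes s: "0 < s" and r: "0 < r" and l: "0 \<le> l" "l \<le> 1"
  shows "alpha ((1 - l) * s + l * r) \<le> (1 - l) * alpha s + l * alpha r"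
proof (rule ccontr)
  assume "\<not> ?thesis"
  then have d: "0 < alpha ((1 - l) * s + l * r) - ((1 - l) * alpha s + l * alpha r)" (is "0 < ?d") by simp
  obtain x where x: "x \<in> A s" "x < alpha s + ?d"
    using cInf_lessD[OF A_ne[OF s], of "alpha s + ?d"] d unfolding alpha_def by auto
  obtain y where y: "y \<in> A r" "y < alpha r + ?d"
    using cInf_lessD[OF A_ne[OF r], of "alpha r + ?d"] d unfolding alpha_def by auto
  have "(1 - l) * x + l * y \<in> A ((1 - l) * s + l * r)" by (rule A_conv[OF x(1) y(1) l])
  then have le: "alpha ((1 - l) * s + l * r) \<le> (1 - l) * x + l * y"
    unfolding alpha_def by (intro cInf_lower A_bdd_below)
  have "(1 - l) * x \<le> (1 - l) * (alpha s + ?d)" using x l by (intro mult_left_mono) auto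
  moreover have "l * y \<le> l * (alpha r + ?d)" using y l by (intro mult_left_mono) auto
  moreover have "(1 - l) * x < (1 - l) * (alpha s + ?d) \<or> l * y < l * (alpha r + ?d)"
    using x y l by (cases "l = 1") auto
  ultimately have "(1 - l) * x + l * y < (1 - l) * (alpha s + ?d) + l * (alpha r + ?d)" by linarith
  moreover have "(1 - l) * (alpha s + ?d) + l * (alpha r + ?d) = alpha ((1 - l) * s + l * r)"
    by (simp add: algebra_simps)
  ultimately show False using le by linarith
qed

lemma L_concave:
  assumes s: "0 < s" and r: "0 < r" and l: "0 \<le> l" "l \<le> 1"
  shows "(1 - l) * L s + l * L r \<le> L ((1 - l) * s + l * r)"
proof -
  have m: "0 < (1 - l) * s + l * r"
  proof -
    have "0 \<le> (1 - l) * s" "0 \<le> l * r" using s r l by auto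
    moreover have "0 < (1 - l) * s \<or> 0 < l * r" using s r l by (cases "l = 1") auto
    ultimately show ?thesis by linarith
  qed
  have e1: "(1 - l) * L s + l * L r = ((1 - l) * beta s + l * beta r) - ((1 - l) * alpha s + l * alpha r)"
    by (simp add: L_eq s r algebra_simps)
  show ?thesis
    using beta_concave[OF s r l] alpha_convex[OF s r l] L_eq[OF m] e1 by linarith
qed

lemma L_linear_bound: assumes "0 \<le> u" shows "L u \<le> L 2 + (L 2 - L 1) * u"
proof (cases "u \<le> 2")
  case True
  have "L u \<le> L 2" using True by (rule L_mono)
  moreover have "0 \<le> (L 2 - L 1) * u" using assms L_mono[of 1 2] by simp
  ultimately show ?thesis by linarith
next
  case False
  define l where "l = 1 / (u - 1)"
  have u1: "0 < u - 1" using False by simp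
  have l: "0 \<le> l" "l \<le> 1" using u1 False by (auto simp: l_def field_simps)
  have e: "l * (u - 1) = 1" using u1 by (simp add: l_def)
  have "(1 - l) * 1 + l * u = 1 + l * (u - 1)" by (simp add: algebra_simps)
  then have "(1 - l) * 1 + l * u = 2" using e by simp
  then have c: "(1 - l) * L 1 + l * L u \<le> L 2" using L_concave[of 1 u l] l False by (simp only:)
  have "l * (L u - L 1) \<le> L 2 - L 1" using c by (simp add: algebra_simps)
  then have "L u - L 1 \<le> (L 2 - L 1) * (u - 1)" using u1 by (simp add: l_def field_simps)
  moreover have "(L 2 - L 1) * (u - 1) \<le> (L 2 - L 1) * u" using L_mono[of 1 2] by (intro mult_left_mono) auto
  moreover have "L 1 \<le> L 2" by (rule L_mono) simp
  ultimately show ?thesis by (simp add: algebra_simps)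
qed

definition "r1 = 2 - sqrt 2"
definition "r2 = 2 + sqrt 2"
definition "ell u = L r1 + (L r2 - L r1) / (r2 - r1) * (u - r1)"

lemma r12: "0 < r1" "r1 < r2" "\<And>u. u^2 - 4 * u + 2 = (u - r1) * (u - r2)"
proof -
  have "sqrt 2 < sqrt (2^2)" by (subst real_sqrt_less_iff) simp
  then have "sqrt 2 < 2" by simp
  then show "0 < r1" by (simp add: r1_def)
  show "r1 < r2" by (simp add: r1_def r2_def)
  fix u :: real
  show "u^2 - 4 * u + 2 = (u - r1) * (u - r2)"
    by (simp add: r1_def r2_def algebra_simps power2_eq_square)
qed

lemma comb_helper: "a \<noteq> b \<Longrightarrow> (1 - (z - a) / (b - a)) * a + ((z - a) / (b - a)) * b = (z::real)"
proof -
  assume "a \<noteq> b"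
  define l where "l = (z - a) / (b - a)"
  then have e: "l * (b - a) = z - a" using \<open>a \<noteq> b\<close> by simp
  have "(1 - l) * a + l * b = a + l * (b - a)"
    by (simp add: algebra_simps)
  then show ?thesis using e by (simp add: l_def)
qed

lemma affine_helper: "(1 - l) * (c + m * (a - r)) + l * (c + m * (b - r)) = c + m * ((1 - l) * a + l * b - r)"
  for l c m a b r :: real
  by (simp add: algebra_simps)

lemma ell_affine: "(1 - l) * ell a + l * ell b = ell ((1 - l) * a + l * b)"
  unfolding ell_def by (rule affine_helper)

lemma ell_r: "ell r1 = L r1" "ell r2 = L r2"
  using r12 by (auto simp: ell_def)

lemma chord:
  assumes u: "0 < u"
  shows "(u^2 - 4 * u + 2) * (L u - ell u) \<le> 0"
proof -
  have r: "0 < r1" "r1 < r2" using r12 by auto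
  consider "u < r1" | "r1 \<le> u" "u \<le> r2" | "r2 < u" by linarith
  then show ?thesis
  proof cases
    case 1
    define l where "l = (r1 - u) / (r2 - u)"
    have l: "0 \<le> l" "l \<le> 1" using 1 r by (auto simp: l_def field_simps)
    have comb: "(1 - l) * u + l * r2 = r1" using 1 r comb_helper[of u r2 r1] by (simp add: l_def)
    have c: "(1 - l) * L u + l * L r2 \<le> L r1" using L_concave[OF u _ l, of r2] r comb by simp
    have e: "(1 - l) * ell u + l * L r2 = L r1" using ell_affine[of l u r2] comb ell_r by simp
    have l1: "0 < 1 - l" using 1 r by (simp add: l_def field_simps)
    have "(1 - l) * (L u - ell u) \<le> 0" using c e by (simp add: algebra_simps)
    then have "L u \<le> ell u" using l1 by (simp add: mult_le_0_iff)
    moreover have "0 \<le> u^2 - 4 * u + 2" using 1 r unfolding r12(3) by (intro mult_nonpos_nonpos) auto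
    ultimately show ?thesis by (simp add: mult_le_0_iff)
  next
    case 2
    show ?thesis
    proof (cases "u = r1")
      case True
      then show ?thesis using ell_r by simp
    next
      case False
      define l where "l = (u - r1) / (r2 - r1)"
      have l: "0 \<le> l" "l \<le> 1" using 2 r by (auto simp: l_def field_simps)
      have comb: "(1 - l) * r1 + l * r2 = u" using r comb_helper[of r1 r2 u] by (simp add: l_def)
      have c: "(1 - l) * L r1 + l * L r2 \<le> L u" using L_concave[OF r(1) _ l, of r2] r comb by simp
      have e: "(1 - l) * L r1 + l * L r2 = ell u" using ell_affine[of l r1 r2] comb ell_r by simp
      have "u^2 - 4 * u + 2 \<le> 0" using 2 r unfolding r12(3) by (intro mult_nonneg_nonpos) auto
      moreover have "0 \<le> L u - ell u" using c e by simp
      ultimately show ?thesis by (simp add: mult_le_0_iff)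
    qed
  next
    case 3
    define l where "l = (r2 - r1) / (u - r1)"
    have l: "0 \<le> l" "l \<le> 1" using 3 r by (auto simp: l_def field_simps)
    have l0: "0 < l" using 3 r by (simp add: l_def)
    have comb: "(1 - l) * r1 + l * u = r2" using 3 r comb_helper[of r1 u r2] by (simp add: l_def)
    have c: "(1 - l) * L r1 + l * L u \<le> L r2" using L_concave[OF r(1) u l] r comb by simp
    have e: "(1 - l) * L r1 + l * ell u = L r2" using ell_affine[of l r1 u] comb ell_r by simp
    have "l * (L u - ell u) \<le> 0" using c e by (simp add: algebra_simps)
    then have "L u \<le> ell u" using l0 by (simp add: mult_le_0_iff)
    moreover have "0 \<le> u^2 - 4 * u + 2" using 3 r unfolding r12(3) by (intro mult_nonneg_nonneg) auto
    ultimately show ?thesis by (simp add: mult_le_0_iff)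
  qed
qed

definition "G x = ln K - ln (f x)"

lemma G_nn: "t < x \<Longrightarrow> 0 < f x \<Longrightarrow> 0 \<le> G x"
  using K_props(1)[of x] by (simp add: G_def)

lemma A_ind: "t < x \<Longrightarrow> 0 < f x \<Longrightarrow> x \<in> A u \<longleftrightarrow> G x \<le> u"
proof -
  assume x: "t < x" "0 < f x"
  have K0: "0 < K" by (rule K_props)
  have "K * exp (- u) \<le> f x \<longleftrightarrow> ln (K * exp (- u)) \<le> ln (f x)"
    using K0 x by (subst ln_le_cancel_iff) auto
  also have "\<dots> \<longleftrightarrow> G x \<le> u" using K0 by (simp add: ln_mult G_def) arith
  finally show ?thesis using x by (simp add: A_def)
qed

lemma A_ind0: "\<not> (t < x \<and> 0 < f x) \<Longrightarrow> x \<notin> A u"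
proof
  assume "\<not> (t < x \<and> 0 < f x)" "x \<in> A u"
  moreover have "0 < K * exp (- u)" using K_props(2) by simp
  ultimately show False by (auto simp: A_def)
qed

lemma fub:
  fixes k Hk :: "real \<Rightarrow> real"
  assumes k[measurable]: "k \<in> borel_measurable borel" and knn: "\<And>u. 0 \<le> u \<Longrightarrow> 0 \<le> k u"
    and Hk: "\<And>w. 0 \<le> w \<Longrightarrow> (\<integral>\<^sup>+u. ennreal (indicator {w..} u * k u) \<partial>lborel) = ennreal (Hk w)"
  shows "(\<integral>\<^sup>+x. ennreal (indicator {t<..} x * (if 0 < f x then Hk (G x) else 0)) \<partial>lborel)
       = (\<integral>\<^sup>+u. ennreal (indicator {0..} u * k u * L u) \<partial>lborel)"
proof -
  let ?h = "\<lambda>(x, u). ennreal (indicator {0..} u * k u) * indicator (A u) x"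
  have hm: "?h \<in> borel_measurable (lborel \<Otimes>\<^sub>M lborel)"
    unfolding A_def by measurable
  have "(\<integral>\<^sup>+u. ennreal (indicator {0..} u * k u * L u) \<partial>lborel)
      = (\<integral>\<^sup>+u. (\<integral>\<^sup>+x. ?h (x, u) \<partial>lborel) \<partial>lborel)"
  proof (intro nn_integral_cong)
    fix u :: real
    have "(\<integral>\<^sup>+x. ?h (x, u) \<partial>lborel) = ennreal (indicator {0..} u * k u) * emeasure lborel (A u)"
      by (simp add: nn_integral_cmult_indicator)
    also have "\<dots> = ennreal (indicator {0..} u * k u * L u)"
      using knn[of u] L_nn[of u] by (simp add: L_emeasure ennreal_mult split: split_indicator)
    finally show "ennreal (indicator {0..} u * k u * L u) = (\<integral>\<^sup>+x. ?h (x, u) \<partial>lborel)" by simp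
  qed
  also have "\<dots> = (\<integral>\<^sup>+x. (\<integral>\<^sup>+u. ?h (x, u) \<partial>lborel) \<partial>lborel)"
    by (rule lborel_pair.Fubini[OF hm])
  also have "\<dots> = (\<integral>\<^sup>+x. ennreal (indicator {t<..} x * (if 0 < f x then Hk (G x) else 0)) \<partial>lborel)"
  proof (intro nn_integral_cong)
    fix x :: real
    show "(\<integral>\<^sup>+u. ?h (x, u) \<partial>lborel) = ennreal (indicator {t<..} x * (if 0 < f x then Hk (G x) else 0))"
    proof (cases "t < x \<and> 0 < f x")
      case True
      have "(\<integral>\<^sup>+u. ?h (x, u) \<partial>lborel) = (\<integral>\<^sup>+u. ennreal (indicator {G x..} u * k u) \<partial>lborel)"
        using True G_nn[of x] by (intro nn_integral_cong) (auto simp: A_ind split: split_indicator)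
      also have "\<dots> = ennreal (Hk (G x))" using True G_nn[of x] by (intro Hk) auto
      finally show ?thesis using True by simp
    next
      case False
      then show ?thesis using A_ind0[OF False] f_nn[of x] by (auto simp: less_le split: split_indicator)
    qed
  qed
  finally show ?thesis by simp
qed

definition "k1 u = (u^2 + 2) * exp (- u)" for u :: real
definition "k2 u = 4 * u * exp (- u)" for u :: real

lemma k1_meas[measurable]: "k1 \<in> borel_measurable borel" unfolding k1_def by measurable
lemma k2_meas[measurable]: "k2 \<in> borel_measurable borel" unfolding k2_def by measurable

lemma k1_aff: "indicator {0..} u * k1 u * (c + d * u) = c * (mm 2 u + 2 * mm 0 u) + d * (mm 3 u + 2 * mm 1 u)"
  by (simp add: k1_def mm_def algebra_simps power2_eq_square power3_eq_cube split: split_indicator)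

lemma k2_aff: "indicator {0..} u * k2 u * (c + d * u) = 4 * c * mm 1 u + 4 * d * mm 2 u"
  by (simp add: k2_def mm_def algebra_simps power2_eq_square split: split_indicator)

lemma aff_int1: "integrable lborel (\<lambda>u. indicator {0..} u * k1 u * (c + d * u))"
  unfolding k1_aff by (intro Bochner_Integration.integrable_add integrable_mult_right mm_int)

lemma aff_int2: "integrable lborel (\<lambda>u. indicator {0..} u * k2 u * (c + d * u))"
  unfolding k2_aff by (intro Bochner_Integration.integrable_add integrable_mult_right mm_int)

lemma aff_val1: "integral\<^sup>L lborel (\<lambda>u. indicator {0..} u * k1 u * (c + d * u)) = 4 * c + 8 * d"
  unfolding k1_aff by (simp add: mm_int mm_val fact_numeral)

lemma aff_val2: "integral\<^sup>L lborel (\<lambda>u. indicator {0..} u * k2 u * (c + d * u)) = 4 * c + 8 * d"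
  unfolding k2_aff by (simp add: mm_int mm_val fact_numeral)

lemma lin_helper: "c + m * (u - r) = (c - m * r) + m * u" for c m u r :: real
  by (simp add: algebra_simps)

lemma ell_lin: "ell u = (L r1 - (L r2 - L r1) / (r2 - r1) * r1) + (L r2 - L r1) / (r2 - r1) * u"
  unfolding ell_def by (rule lin_helper)

lemma G_meas[measurable]: "G \<in> borel_measurable borel" unfolding G_def by measurable

lemma exp_G: "0 < f x \<Longrightarrow> exp (- G x) = f x / K"
  using K_props(2) by (simp add: G_def exp_diff)

lemma Lint1: "integrable lborel (\<lambda>u. indicator {0..} u * k1 u * L u)"
proof (rule Bochner_Integration.integrable_bound[OF aff_int1[of "L 2" "L 2 - L 1"]])
  show "(\<lambda>u. indicator {0..} u * k1 u * L u) \<in> borel_measurable lborel" by measurable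
  show "AE u in lborel. norm (indicator {0..} u * k1 u * L u) \<le> norm (indicator {0..} u * k1 u * (L 2 + (L 2 - L 1) * u))"
  proof (intro AE_I2)
    fix u :: real
    have k: "0 \<le> k1 u" by (simp add: k1_def)
    show "norm (indicator {0..} u * k1 u * L u) \<le> norm (indicator {0..} u * k1 u * (L 2 + (L 2 - L 1) * u))"
    proof (cases "0 \<le> u")
      case True
      have "L u \<le> L 2 + (L 2 - L 1) * u" using L_linear_bound[OF True] .
      then show ?thesis using True k L_nn[of u] by (simp add: mult_left_mono)
    qed simp
  qed
qed

lemma Lint2: "integrable lborel (\<lambda>u. indicator {0..} u * k2 u * L u)"
proof (rule Bochner_Integration.integrable_bound[OF aff_int2[of "L 2" "L 2 - L 1"]])
  show "(\<lambda>u. indicator {0..} u * k2 u * L u) \<in> borel_measurable lborel" by measurable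
  show "AE u in lborel. norm (indicator {0..} u * k2 u * L u) \<le> norm (indicator {0..} u * k2 u * (L 2 + (L 2 - L 1) * u))"
  proof (intro AE_I2)
    fix u :: real
    show "norm (indicator {0..} u * k2 u * L u) \<le> norm (indicator {0..} u * k2 u * (L 2 + (L 2 - L 1) * u))"
    proof (cases "0 \<le> u")
      case True
      have k: "0 \<le> k2 u" using True by (simp add: k2_def)
      have "L u \<le> L 2 + (L 2 - L 1) * u" using L_linear_bound[OF True] .
      then show ?thesis using True k L_nn[of u] by (simp add: mult_left_mono)
    qed simp
  qed
qed

lemma R_ineq: "integral\<^sup>L lborel (\<lambda>u. indicator {0..} u * k1 u * L u) \<le> integral\<^sup>L lborel (\<lambda>u. indicator {0..} u * k2 u * L u)"
proof -
  define c where "c = L r1 - (L r2 - L r1) / (r2 - r1) * r1"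
  define d where "d = (L r2 - L r1) / (r2 - r1)"
  have ell: "ell u = c + d * u" for u unfolding c_def d_def by (rule ell_lin)
  have "integral\<^sup>L lborel (\<lambda>u. indicator {0..} u * k1 u * L u + indicator {0..} u * k2 u * (c + d * u))
     \<le> integral\<^sup>L lborel (\<lambda>u. indicator {0..} u * k2 u * L u + indicator {0..} u * k1 u * (c + d * u))"
  proof (rule integral_mono_AE)
    show "integrable lborel (\<lambda>u. indicator {0..} u * k1 u * L u + indicator {0..} u * k2 u * (c + d * u))"
      by (intro Bochner_Integration.integrable_add Lint1 aff_int2)
    show "integrable lborel (\<lambda>u. indicator {0..} u * k2 u * L u + indicator {0..} u * k1 u * (c + d * u))"
      by (intro Bochner_Integration.integrable_add Lint2 aff_int1)
    show "AE u in lborel. indicator {0..} u * k1 u * L u + indicator {0..} u * k2 u * (c + d * u)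
        \<le> indicator {0..} u * k2 u * L u + indicator {0..} u * k1 u * (c + d * u)"
      using AE_lborel_singleton[of 0]
    proof eventually_elim
      case (elim u)
      show ?case
      proof (cases "0 < u")
        case True
        have "(u^2 - 4 * u + 2) * (L u - ell u) \<le> 0" by (rule chord[OF True])
        then have "exp (- u) * ((u^2 - 4 * u + 2) * (L u - ell u)) \<le> 0"
          by (simp add: mult_le_0_iff)
        moreover have "k1 u * L u + k2 u * (c + d * u) - (k2 u * L u + k1 u * (c + d * u))
            = exp (- u) * ((u^2 - 4 * u + 2) * (L u - ell u))"
          unfolding ell by (simp add: k1_def k2_def algebra_simps)
        ultimately show ?thesis using True by simp
      next
        case False
        then show ?thesis using elim by simp
      qed
    qed
  qed
  then show ?thesis
    using aff_val1[of c d] aff_val2[of c d] Lint1 Lint2 aff_int1[of c d] aff_int2[of c d]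
    by (simp add: Bochner_Integration.integral_add)
qed

lemma x_side:
  fixes k Hk :: "real \<Rightarrow> real" and p :: "real \<Rightarrow> real"
  assumes k[measurable]: "k \<in> borel_measurable borel" and knn: "\<And>u. 0 \<le> u \<Longrightarrow> 0 \<le> k u"
    and Hk: "\<And>w. 0 \<le> w \<Longrightarrow> (\<integral>\<^sup>+u. ennreal (indicator {w..} u * k u) \<partial>lborel) = ennreal (Hk w)"
    and p[measurable]: "p \<in> borel_measurable borel"
    and Hp: "\<And>w. 0 \<le> w \<Longrightarrow> Hk w = p w * exp (- w)"
    and pnn: "\<And>w. 0 \<le> w \<Longrightarrow> 0 \<le> p w"
    and Lint: "integrable lborel (\<lambda>u. indicator {0..} u * k u * L u)"
  shows "integrable lborel (\<lambda>x. indicator {t<..} x * f x * p (G x))"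
    "integral\<^sup>L lborel (\<lambda>x. indicator {t<..} x * f x * p (G x)) = K * integral\<^sup>L lborel (\<lambda>u. indicator {0..} u * k u * L u)"
proof -
  have K0: "0 < K" by (rule K_props)
  have eq: "indicator {t<..} x * (if 0 < f x then Hk (G x) else 0) = indicator {t<..} x * f x * p (G x) / K" for x
  proof (cases "t < x \<and> 0 < f x")
    case True
    then show ?thesis using G_nn[of x] Hp[of "G x"] exp_G[of x] by simp
  next
    case False
    then show ?thesis using f_nn[of x] by (auto simp: less_le)
  qed
  have R0: "0 \<le> integral\<^sup>L lborel (\<lambda>u. indicator {0..} u * k u * L u)"
    using knn L_nn by (intro integral_nonneg_AE AE_I2) (auto split: split_indicator)
  have "(\<integral>\<^sup>+x. ennreal (indicator {t<..} x * f x * p (G x) / K) \<partial>lborel)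
      = (\<integral>\<^sup>+u. ennreal (indicator {0..} u * k u * L u) \<partial>lborel)"
    using fub[OF k knn Hk] unfolding eq by simp
  also have "\<dots> = ennreal (integral\<^sup>L lborel (\<lambda>u. indicator {0..} u * k u * L u))"
    using knn L_nn by (intro nn_integral_eq_integral Lint AE_I2) (auto split: split_indicator)
  finally have nn: "(\<integral>\<^sup>+x. ennreal (indicator {t<..} x * f x * p (G x) / K) \<partial>lborel)
      = ennreal (integral\<^sup>L lborel (\<lambda>u. indicator {0..} u * k u * L u))" .
  have nonneg: "0 \<le> indicator {t<..} x * f x * p (G x) / K" for x
  proof (cases "t < x \<and> 0 < f x")
    case True
    then show ?thesis using G_nn[of x] pnn[of "G x"] K0 by simp
  next
    case False
    then show ?thesis using f_nn[of x] by (auto simp: less_le)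
  qed
  have i1: "integrable lborel (\<lambda>x. indicator {t<..} x * f x * p (G x) / K)"
    and v1: "integral\<^sup>L lborel (\<lambda>x. indicator {t<..} x * f x * p (G x) / K) = integral\<^sup>L lborel (\<lambda>u. indicator {0..} u * k u * L u)"
    using nn_to_int[OF _ nonneg nn R0] by auto
  have e2: "(\<lambda>x. indicator {t<..} x * f x * p (G x)) = (\<lambda>x. K * (indicator {t<..} x * f x * p (G x) / K))"
    using K0 by auto
  show "integrable lborel (\<lambda>x. indicator {t<..} x * f x * p (G x))"
    unfolding e2 using i1 by (rule integrable_mult_right)
  show "integral\<^sup>L lborel (\<lambda>x. indicator {t<..} x * f x * p (G x)) = K * integral\<^sup>L lborel (\<lambda>u. indicator {0..} u * k u * L u)"
    unfolding e2 integral_mult_right_zero using v1 by simp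
qed

lemma core_result:
  shows "integrable lborel (\<lambda>x. indicator {t<..} x * f x)"
    and "integrable lborel (\<lambda>x. indicator {t<..} x * f x * G x)"
    and "integrable lborel (\<lambda>x. indicator {t<..} x * f x * (G x)^2)"
    and "integral\<^sup>L lborel (\<lambda>x. indicator {t<..} x * f x) = S"
    and "integral\<^sup>L lborel (\<lambda>x. indicator {t<..} x * f x * (G x)^2) \<le> 2 * integral\<^sup>L lborel (\<lambda>x. indicator {t<..} x * f x * G x)"
proof -
  have k1nn: "\<And>u. 0 \<le> u \<Longrightarrow> 0 \<le> k1 u" by (simp add: k1_def)
  have H1': "\<And>w. 0 \<le> w \<Longrightarrow> (\<integral>\<^sup>+u. ennreal (indicator {w..} u * k1 u) \<partial>lborel) = ennreal ((w^2 + 2*w + 4) * exp (- w))"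
    by (simp add: k1_def H1_nn)
  have p1m: "(\<lambda>w::real. w^2 + 2*w + 4) \<in> borel_measurable borel" by measurable
  have p1e: "\<And>w. 0 \<le> w \<Longrightarrow> (w^2 + 2*w + 4) * exp (- w) = (\<lambda>w. w^2 + 2*w + 4) w * exp (- w)" by simp
  have p1n: "\<And>w::real. 0 \<le> w \<Longrightarrow> 0 \<le> (\<lambda>w. w^2 + 2*w + 4) w" by simp
  note X1 = x_side[OF k1_meas k1nn H1' p1m p1e p1n Lint1]
  have k2nn: "\<And>u. 0 \<le> u \<Longrightarrow> 0 \<le> k2 u" by (simp add: k2_def)
  have H2': "\<And>w. 0 \<le> w \<Longrightarrow> (\<integral>\<^sup>+u. ennreal (indicator {w..} u * k2 u) \<partial>lborel) = ennreal (4 * (w + 1) * exp (- w))"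
    by (simp add: k2_def H2_nn)
  have p2m: "(\<lambda>w::real. 4 * w + 4) \<in> borel_measurable borel" by measurable
  have p2e: "\<And>w. 0 \<le> w \<Longrightarrow> 4 * (w + 1) * exp (- w) = (\<lambda>w. 4 * w + 4) w * exp (- w)" by (simp add: algebra_simps)
  have p2n: "\<And>w::real. 0 \<le> w \<Longrightarrow> 0 \<le> (\<lambda>w. 4 * w + 4) w" by simp
  note X2 = x_side[OF k2_meas k2nn H2' p2m p2e p2n Lint2]
  have bnd: "norm (indicator {t<..} x * f x * (G x)^j) \<le> norm (indicator {t<..} x * f x * (G x ^ 2 + 2 * G x + 4))"
    if j2: "j \<le> 2" for j x
  proof (cases "t < x \<and> 0 < f x")
    case True
    have g: "0 \<le> G x" using G_nn True by simp
    have "(G x)^j \<le> G x ^ 2 + 2 * G x + 4"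
    proof -
      consider "j = 0" | "j = 1" | "j = 2" using j2 by linarith
      then show ?thesis using g by cases (auto simp: power2_eq_square)
    qed
    then show ?thesis using True g f_nn[of x] by (simp add: abs_mult mult_left_mono)
  next
    case False
    then show ?thesis using f_nn[of x] by (auto simp: less_le)
  qed
  have ij: "integrable lborel (\<lambda>x. indicator {t<..} x * f x * (G x)^j)" if "j \<le> 2" for j
    by (rule Bochner_Integration.integrable_bound[OF X1(1)]) (use bnd[OF that] in auto)
  show i0: "integrable lborel (\<lambda>x. indicator {t<..} x * f x)" using ij[of 0] by simp
  show i1: "integrable lborel (\<lambda>x. indicator {t<..} x * f x * G x)" using ij[of 1] by simp
  show i2: "integrable lborel (\<lambda>x. indicator {t<..} x * f x * (G x)^2)" using ij[of 2] by simp
  show I0: "integral\<^sup>L lborel (\<lambda>x. indicator {t<..} x * f x) = S"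
  proof -
    have "(\<integral>\<^sup>+x. ennreal (indicator {t<..} x * f x) \<partial>lborel) = ennreal S"
      using fint by (subst nn_integral_cong[where v="\<lambda>x. ennreal (f x) * indicator {t<..} x"])
        (auto split: split_indicator)
    then show ?thesis using f_nn S0 by (intro nn_to_int(2)) auto
  qed
  define I0 where "I0 = integral\<^sup>L lborel (\<lambda>x. indicator {t<..} x * f x)"
  define I1 where "I1 = integral\<^sup>L lborel (\<lambda>x. indicator {t<..} x * f x * G x)"
  define I2 where "I2 = integral\<^sup>L lborel (\<lambda>x. indicator {t<..} x * f x * (G x)^2)"
  have "integral\<^sup>L lborel (\<lambda>x. indicator {t<..} x * f x * (G x ^ 2 + 2 * G x + 4)) = I2 + 2 * I1 + 4 * I0"
  proof -
    have "(\<lambda>x. indicator {t<..} x * f x * (G x ^ 2 + 2 * G x + 4))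
        = (\<lambda>x. indicator {t<..} x * f x * (G x)^2 + 2 * (indicator {t<..} x * f x * G x) + 4 * (indicator {t<..} x * f x))"
      by (auto simp: algebra_simps)
    then show ?thesis using i0 i1 i2 unfolding I0_def I1_def I2_def by simp
  qed
  moreover have "integral\<^sup>L lborel (\<lambda>x. indicator {t<..} x * f x * (4 * G x + 4)) = 4 * I1 + 4 * I0"
  proof -
    have "(\<lambda>x. indicator {t<..} x * f x * (4 * G x + 4))
        = (\<lambda>x. 4 * (indicator {t<..} x * f x * G x) + 4 * (indicator {t<..} x * f x))"
      by (auto simp: algebra_simps)
    then show ?thesis using i0 i1 unfolding I0_def I1_def by simp
  qed
  moreover have "K * integral\<^sup>L lborel (\<lambda>u. indicator {0..} u * k1 u * L u) \<le> K * integral\<^sup>L lborel (\<lambda>u. indicator {0..} u * k2 u * L u)"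
    using R_ineq K_props(2) by (intro mult_left_mono) auto
  ultimately have "I2 + 2 * I1 + 4 * I0 \<le> 4 * I1 + 4 * I0" using X1(2) X2(2) by simp
  then show "integral\<^sup>L lborel (\<lambda>x. indicator {t<..} x * f x * (G x)^2) \<le> 2 * integral\<^sup>L lborel (\<lambda>x. indicator {t<..} x * f x * G x)"
    unfolding I1_def I2_def by simp
qed

end


lemma translate:
  fixes M :: "'a measure" and X :: "'a \<Rightarrow> real" and f :: "real \<Rightarrow> real" and phi :: "real \<Rightarrow> real"
  assumes P: "prob_space M" and fnn: "\<And>x. 0 \<le> f x"
    and D: "distributed M lborel X (\<lambda>x. ennreal (f x))"
    and S: "measure M {\<omega> \<in> space M. t < X \<omega>} = S" "0 < S"
    and phi[measurable]: "phi \<in> borel_measurable borel"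
  shows "integrable (uniform_measure M {\<omega> \<in> space M. t < X \<omega>}) (\<lambda>\<omega>. phi (X \<omega>))
      \<longleftrightarrow> integrable lborel (\<lambda>x. indicator {t<..} x * f x * phi x)"
    "integral\<^sup>L (uniform_measure M {\<omega> \<in> space M. t < X \<omega>}) (\<lambda>\<omega>. phi (X \<omega>))
      = integral\<^sup>L lborel (\<lambda>x. indicator {t<..} x * f x * phi x) / S"
proof -
  interpret prob_space M by (rule P)
  let ?E = "{\<omega> \<in> space M. t < X \<omega>}"
  have Xm[measurable]: "X \<in> borel_measurable M"
    using distributed_measurable[OF D] by (simp add: measurable_cong_sets[OF refl sets_lborel])
  have fm[measurable]: "f \<in> borel_measurable borel"
    using distributed_borel_measurable[OF D] fnn
    by (simp add: measurable_cong_sets[OF sets_lborel refl])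
  have Em[measurable]: "?E \<in> sets M" by measurable
  have eE: "emeasure M ?E = ennreal S" using S by (simp add: emeasure_eq_measure)
  have U: "uniform_measure M ?E = density M (\<lambda>\<omega>. ennreal (indicator ?E \<omega> / S))"
    unfolding uniform_measure_def eE
    using divide_ennreal[of 1 S] S by (intro density_cong) (auto split: split_indicator)
  define psi where "psi x = indicator {t<..} x / S * phi x" for x
  have psim[measurable]: "psi \<in> borel_measurable borel" unfolding psi_def by measurable
  have cong: "\<omega> \<in> space M \<Longrightarrow> (indicator ?E \<omega> / S) *\<^sub>R phi (X \<omega>) = psi (X \<omega>)" for \<omega>
    by (simp add: psi_def split: split_indicator)
  have dd: "distr M lborel X = density lborel (\<lambda>x. ennreal (f x))"
    using D by (simp add: distributed_def)
  have e3: "(\<lambda>x. f x *\<^sub>R psi x) = (\<lambda>x. indicator {t<..} x * f x * phi x * (1 / S))"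
    by (auto simp: psi_def)
  have "integrable (uniform_measure M ?E) (\<lambda>\<omega>. phi (X \<omega>))
      \<longleftrightarrow> integrable M (\<lambda>\<omega>. (indicator ?E \<omega> / S) *\<^sub>R phi (X \<omega>))"
    unfolding U by (rule integrable_density) (use S in \<open>auto intro!: AE_I2 split: split_indicator\<close>)
  also have "\<dots> \<longleftrightarrow> integrable M (\<lambda>\<omega>. psi (X \<omega>))"
    using cong by (intro Bochner_Integration.integrable_cong) auto
  also have "\<dots> \<longleftrightarrow> integrable (distr M lborel X) psi"
    by (rule integrable_distr_eq[symmetric]) auto
  also have "\<dots> \<longleftrightarrow> integrable lborel (\<lambda>x. f x *\<^sub>R psi x)"
    unfolding dd by (rule integrable_density) (auto simp: fnn)
  also have "\<dots> \<longleftrightarrow> integrable lborel (\<lambda>x. indicator {t<..} x * f x * phi x)"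
    unfolding e3 using S by (simp only: integrable_mult_right_iff) simp
  finally show "integrable (uniform_measure M ?E) (\<lambda>\<omega>. phi (X \<omega>))
      \<longleftrightarrow> integrable lborel (\<lambda>x. indicator {t<..} x * f x * phi x)" .
  have "integral\<^sup>L (uniform_measure M ?E) (\<lambda>\<omega>. phi (X \<omega>))
      = integral\<^sup>L M (\<lambda>\<omega>. (indicator ?E \<omega> / S) *\<^sub>R phi (X \<omega>))"
    unfolding U by (rule integral_density) (use S in \<open>auto intro!: AE_I2 split: split_indicator\<close>)
  also have "\<dots> = integral\<^sup>L M (\<lambda>\<omega>. psi (X \<omega>))"
    using cong by (intro Bochner_Integration.integral_cong) auto
  also have "\<dots> = integral\<^sup>L (distr M lborel X) psi"
    by (rule integral_distr[symmetric]) auto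
  also have "\<dots> = integral\<^sup>L lborel (\<lambda>x. f x *\<^sub>R psi x)"
    unfolding dd by (rule integral_density) (auto simp: fnn)
  also have "\<dots> = integral\<^sup>L lborel (\<lambda>x. indicator {t<..} x * f x * phi x) / S"
    unfolding e3 by simp
  finally show "integral\<^sup>L (uniform_measure M ?E) (\<lambda>\<omega>. phi (X \<omega>))
      = integral\<^sup>L lborel (\<lambda>x. indicator {t<..} x * f x * phi x) / S" .
qed


theorem theorem3p8:
  fixes M :: "'a measure" and X :: "'a \<Rightarrow> real" and f :: "real \<Rightarrow> real"
  assumes "prob_space M"
    and "\<And>x. 0 \<le> f x"
    and "f \<in> borel_measurable lborel"
    and "distributed M lborel X (\<lambda>x. ennreal (f x))"
    and "\<forall>\<omega>\<in>space M. 0 \<le> X \<omega>"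
    and "log_concave_on {0<..} f"
    and "t \<in> surv_support M X"
  shows "integrable (cond_space M X t) (\<lambda>\<omega>. (residual_info M X f t \<omega>)\<^sup>2)
    \<and> residual_varentropy M X f t \<le> 1"
proof -
  interpret prob_space M by (rule assms(1))
  let ?E = "{\<omega> \<in> space M. t < X \<omega>}"
  define S where "S = surv M X t"
  have t0: "0 \<le> t" and S0: "0 < S" using assms(7) by (auto simp: surv_support_def S_def)
  have SE: "measure M ?E = S" by (simp add: S_def surv_def)
  have D: "distributed M lborel X (\<lambda>x. ennreal (f x))" by (rule assms(4))
  have Xm[measurable]: "X \<in> borel_measurable M"
    using distributed_measurable[OF D] by (simp add: measurable_cong_sets[OF refl sets_lborel])
  have fm[measurable]: "f \<in> borel_measurable borel"
    using assms(3) by (simp add: measurable_cong_sets[OF sets_lborel refl])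
  have dd: "distr M lborel X = density lborel (\<lambda>x. ennreal (f x))"
    using D by (simp add: distributed_def)
  have fint: "(\<integral>\<^sup>+x. ennreal (f x) * indicator {t<..} x \<partial>lborel) = ennreal S"
  proof -
    have "(\<integral>\<^sup>+x. ennreal (f x) * indicator {t<..} x \<partial>lborel) = emeasure (density lborel (\<lambda>x. ennreal (f x))) {t<..}"
      by (simp add: emeasure_density)
    also have "\<dots> = emeasure (distr M lborel X) {t<..}" by (simp add: dd)
    also have "\<dots> = emeasure M (X -` {t<..} \<inter> space M)" by (simp add: emeasure_distr)
    also have "X -` {t<..} \<inter> space M = ?E" by auto
    also have "emeasure M ?E = ennreal S" using SE by (simp add: emeasure_eq_measure)
    finally show ?thesis .
  qed
  note CR = core_result[OF assms(2) fm assms(6) t0 fint S0]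
  define g where "g = G f t"
  define c0 where "c0 = ln (K f t) - ln S"
  have K0: "0 < K f t" by (rule K_props(2)[OF assms(2) fm assms(6) t0 fint S0])
  define I1 where "I1 = integral\<^sup>L lborel (\<lambda>x. indicator {t<..} x * f x * g x)"
  define I2 where "I2 = integral\<^sup>L lborel (\<lambda>x. indicator {t<..} x * f x * (g x)^2)"
  have i0: "integrable lborel (\<lambda>x. indicator {t<..} x * f x)"
    and i1: "integrable lborel (\<lambda>x. indicator {t<..} x * f x * g x)"
    and i2: "integrable lborel (\<lambda>x. indicator {t<..} x * f x * (g x)^2)"
    and I0: "integral\<^sup>L lborel (\<lambda>x. indicator {t<..} x * f x) = S"
    and I21: "I2 \<le> 2 * I1"
    using CR unfolding g_def I1_def I2_def by auto
  define phi where "phi x = ln (f x / S)" for x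
  have phim[measurable]: "phi \<in> borel_measurable borel" unfolding phi_def by measurable
  have phi2m[measurable]: "(\<lambda>x. (phi x)^2) \<in> borel_measurable borel" by measurable
  have RI: "residual_info M X f t = (\<lambda>\<omega>. phi (X \<omega>))"
    by (auto simp: residual_info_def residual_pdf_def residual_lifetime_def phi_def S_def)
  have N: "cond_space M X t = uniform_measure M ?E" by (simp add: cond_space_def)
  have fphi: "f x * phi x = f x * (c0 - g x)" for x
  proof (cases "0 < f x")
    case True
    then show ?thesis using S0 K0 by (simp add: phi_def c0_def g_def G_def[OF assms(2) fm assms(6) t0 fint S0] ln_div)
  next
    case False
    then show ?thesis using assms(2)[of x] by (simp add: less_le)
  qed
  have e1: "(\<lambda>x. indicator {t<..} x * f x * phi x)
      = (\<lambda>x. c0 * (indicator {t<..} x * f x) - indicator {t<..} x * f x * g x)"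
  proof
    fix x show "indicator {t<..} x * f x * phi x = c0 * (indicator {t<..} x * f x) - indicator {t<..} x * f x * g x"
      using fphi[of x] by (cases "t < x") (simp_all add: algebra_simps)
  qed
  have e2: "(\<lambda>x. indicator {t<..} x * f x * (phi x)^2)
      = (\<lambda>x. c0^2 * (indicator {t<..} x * f x) - 2 * c0 * (indicator {t<..} x * f x * g x) + indicator {t<..} x * f x * (g x)^2)"
  proof
    fix x
    have "f x * (phi x)^2 = (f x * phi x) * phi x" by (simp add: power2_eq_square)
    also have "\<dots> = f x * (c0 - g x) * phi x" by (simp add: fphi)
    also have "\<dots> = (c0 - g x) * (f x * phi x)" by simp
    also have "\<dots> = f x * (c0 - g x)^2" by (simp add: fphi power2_eq_square)
    finally have "f x * (phi x)^2 = f x * (c0 - g x)^2" .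
    then show "indicator {t<..} x * f x * (phi x)^2 = c0^2 * (indicator {t<..} x * f x) - 2 * c0 * (indicator {t<..} x * f x * g x) + indicator {t<..} x * f x * (g x)^2"
      by (cases "t < x") (simp_all add: algebra_simps power2_eq_square)
  qed
  note T1 = translate[OF assms(1) assms(2) D SE S0 phim]
  note T2 = translate[OF assms(1) assms(2) D SE S0 phi2m]
  have int1: "integrable lborel (\<lambda>x. indicator {t<..} x * f x * phi x)"
    unfolding e1 using i0 i1 by simp
  have int2: "integrable lborel (\<lambda>x. indicator {t<..} x * f x * (phi x)^2)"
    unfolding e2 using i0 i1 i2 by simp
  have v1: "integral\<^sup>L lborel (\<lambda>x. indicator {t<..} x * f x * phi x) = c0 * S - I1"
    unfolding e1 using i0 i1 I0 by (simp add: I1_def)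
  have v2: "integral\<^sup>L lborel (\<lambda>x. indicator {t<..} x * f x * (phi x)^2) = c0^2 * S - 2 * c0 * I1 + I2"
    unfolding e2 using i0 i1 i2 I0 by (simp add: I1_def I2_def)
  have PN: "prob_space (uniform_measure M ?E)"
    using SE S0 by (intro prob_space_uniform_measure) (auto simp: emeasure_eq_measure)
  have sq: "integrable (uniform_measure M ?E) (\<lambda>\<omega>. (phi (X \<omega>))^2)" using T2(1) int2 by simp
  have lin: "integrable (uniform_measure M ?E) (\<lambda>\<omega>. phi (X \<omega>))" using T1(1) int1 by simp
  have EZ: "integral\<^sup>L (uniform_measure M ?E) (\<lambda>\<omega>. phi (X \<omega>)) = (c0 * S - I1) / S" using T1(2) v1 by simp
  have EZ2: "integral\<^sup>L (uniform_measure M ?E) (\<lambda>\<omega>. (phi (X \<omega>))^2) = (c0^2 * S - 2 * c0 * I1 + I2) / S"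
    using T2(2) v2 by simp
  have var: "residual_varentropy M X f t = (c0^2 * S - 2 * c0 * I1 + I2) / S - ((c0 * S - I1) / S)^2"
    unfolding residual_varentropy_def RI N
    using prob_space.variance_eq[OF PN lin sq] EZ EZ2 by simp
  define mu where "mu = I1 / S"
  have "(c0^2 * S - 2 * c0 * I1 + I2) / S - ((c0 * S - I1) / S)^2 = I2 / S - mu^2"
    using S0 by (simp add: mu_def field_simps power2_eq_square)
  also have "\<dots> \<le> 2 * mu - mu^2"
    using I21 S0 by (simp add: mu_def divide_right_mono)
  also have "\<dots> \<le> 1"
  proof -
    have "0 \<le> (mu - 1)^2" by simp
    then show ?thesis by (simp add: power2_eq_square algebra_simps)
  qed
  finally have "residual_varentropy M X f t \<le> 1" using var by simp
  moreover have "integrable (cond_space M X t) (\<lambda>\<omega>. (residual_info M X f t \<omega>)\<^sup>2)"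
    unfolding RI N using sq .
  ultimately show ?thesis by simp
qed

end
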